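(* Let $R=\{r_{ab}\}_{N\times N}$ be the transition rate matrix of an irreducible continuous-time Markov jump process on states $\{1,\dots,N\}$: for $a\neq b$, $r_{ab}\ge 0$ is the rate of jumps from $b$ to $a$, and $r_{bb}=-\sum_{a\neq b} r_{ab}$. Let $\boldsymbol{\pi}$ be the unique stationary distribution ($R\boldsymbol{\pi}=0$, $\boldsymbol{1}^\top\boldsymbol{\pi}=1$), and let $Z=\int_0^\infty\left(e^{Rt}-\boldsymbol{\pi}\boldsymbol{1}^\top\right)\mathrm{d}t$ be the fundamental matrix. Fix distinct states $i\neq j$ and states $k,l$ different from $i$ and $j$. Regard $R$ (and hence $\boldsymbol{\pi}$ and $Z$) as a function of the single off-diagonal rate $r_{ij}>0$, with all other off-diagonal rates held fixed and the diagonal entry $r_{jj}=-\sum_{a\neq j}r_{aj}$ adjusted accordingly, so that $\frac{\mathrm{d}R}{\mathrm{d}r_{ij}}=E_{ij}-E_{jj}$, where $E_{ab}$ denotes the matrix unit with a $1$ in position $(a,b)$. Define $$\chi_{ij}^{kl}=\frac{Z_{ki}-Z_{kj}}{Z_{li}-Z_{lj}}.$$ Then, at every value of $r_{ij}$ where $Z_{li}-Z_{lj}\neq 0$, $\chi_{ij}^{kl}$ is independent of $r_{ij}$, i.e. $\frac{\mathrm{d}\chi_{ij}^{kl}}{\mathrm{d}r_{ij}}=0$.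
   Context: The ratio $\chi_{ij}^{kl}$ equals the long-time limit of the ratio of the responses $\frac{\mathrm{d}}{\mathrm{d}r_{ij}}\langle \tau_k(\tau)\rangle/\frac{\mathrm{d}}{\mathrm{d}r_{ij}}\langle \tau_l(\tau)\rangle$ of the total dwelling times in states $k$ and $l$ up to time $\tau$. Irreducibility is assumed throughout, so the stationary distribution is unique and $\lim_{t\to\infty}e^{Rt}=\boldsymbol{\pi}\boldsymbol{1}^\top$; $\boldsymbol{1}$ is the all-ones column vector. *)

theory Defs
  imports "HOL-Analysis.Analysis"
begin

text \<open>States are the elements of a finite type 'n (so N = CARD('n)).
  Matrices are real^'n^'n, with M $ a $ b the (a,b) entry; ** is matrix product.\<close>

definition mpow :: "real^'n^'n \<Rightarrow> nat \<Rightarrow> real^'n^'n" where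
  "mpow A n = ((\<lambda>M. A ** M) ^^ n) (mat 1)"

definition mexp :: "real \<Rightarrow> real^'n^'n \<Rightarrow> real^'n^'n" where
  "mexp t A = (\<chi> a b. \<Sum>n. (t ^ n / fact n) * (mpow A n $ a $ b))"

text \<open>Rate matrix: r_ab >= 0 off the diagonal is the rate of jumps b -> a,
  and the diagonal entries make the columns sum to zero.\<close>
definition rate_matrix :: "real^'n::finite^'n \<Rightarrow> bool" where
  "rate_matrix R \<longleftrightarrow> (\<forall>a b. a \<noteq> b \<longrightarrow> R $ a $ b \<ge> 0)
     \<and> (\<forall>b. R $ b $ b = - (\<Sum>a\<in>UNIV - {b}. R $ a $ b))"

definition irreducible_rates :: "real^'n::finite^'n \<Rightarrow> bool" where
  "irreducible_rates R \<longleftrightarrow>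
     (\<forall>a b. (b, a) \<in> {(y, x). x \<noteq> y \<and> R $ x $ y > 0}\<^sup>*)"

definition stat_dist :: "real^'n::finite^'n \<Rightarrow> real^'n" where
  "stat_dist R = (THE p. R *v p = 0 \<and> sum (\<lambda>a. p $ a) UNIV = 1)"

definition fund_matrix :: "real^'n::finite^'n \<Rightarrow> real^'n^'n" where
  "fund_matrix R = (\<chi> a b. integral {0..} (\<lambda>t. mexp t R $ a $ b - stat_dist R $ a))"

text \<open>The rate matrix as a function of the single rate r_ij = x, all other
  off-diagonal rates as in R0, diagonal entry r_jj adjusted:
  R(x) = R0 + (x - r_ij) (E_ij - E_jj).\<close>
definition vary_rate :: "real^'n::finite^'n \<Rightarrow> 'n \<Rightarrow> 'n \<Rightarrow> real \<Rightarrow> real^'n^'n" where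
  "vary_rate R0 i j x = (\<chi> a b.
      if a = i \<and> b = j then x
      else if a = j \<and> b = j then R0 $ j $ j + R0 $ i $ j - x
      else R0 $ a $ b)"

end

theory Submission
  imports Defs
begin


typedef (overloaded) 'n sq = "UNIV :: ((real^'n::finite) \<Rightarrow>\<^sub>L (real^'n)) set"
  morphisms Rep_sq Abs_sq by simp

setup_lifting type_definition_sq

instantiation sq :: (finite) real_normed_vector
begin
lift_definition norm_sq :: "'a sq \<Rightarrow> real" is norm .
lift_definition minus_sq :: "'a sq \<Rightarrow> 'a sq \<Rightarrow> 'a sq" is "(-)" .
lift_definition plus_sq :: "'a sq \<Rightarrow> 'a sq \<Rightarrow> 'a sq" is "(+)" .
lift_definition uminus_sq :: "'a sq \<Rightarrow> 'a sq" is "uminus" .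
lift_definition zero_sq :: "'a sq" is "0" .
lift_definition scaleR_sq :: "real \<Rightarrow> 'a sq \<Rightarrow> 'a sq" is "scaleR" .
definition dist_sq :: "'a sq \<Rightarrow> 'a sq \<Rightarrow> real" where "dist_sq a b = norm (a - b)"
definition sgn_sq :: "'a sq \<Rightarrow> 'a sq" where "sgn_sq x = scaleR (inverse (norm x)) x"
definition uniformity_sq :: "('a sq \<times> 'a sq) filter" where
  "uniformity_sq = (INF e\<in>{0 <..}. principal {(x, y). dist x y < e})"
definition open_sq :: "'a sq set \<Rightarrow> bool" where
  "open_sq S = (\<forall>x\<in>S. \<forall>\<^sub>F (x', y) in uniformity. x' = x \<longrightarrow> y \<in> S)"
instance
proof
  fix a b c :: "'a sq" and r s :: real
  show "a + b + c = a + (b + c)" by transfer (simp add: algebra_simps)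
  show "a + b = b + a" by transfer (simp add: algebra_simps)
  show "0 + a = a" by transfer simp
  show "- a + a = 0" by transfer simp
  show "a - b = a + - b" by transfer simp
  show "r *\<^sub>R (a + b) = r *\<^sub>R a + r *\<^sub>R b" by transfer (simp add: algebra_simps)
  show "(r + s) *\<^sub>R a = r *\<^sub>R a + s *\<^sub>R a" by transfer (simp add: algebra_simps)
  show "r *\<^sub>R s *\<^sub>R a = (r * s) *\<^sub>R a" by transfer simp
  show "1 *\<^sub>R a = a" by transfer simp
  show "dist a b = norm (a - b)" by (simp add: dist_sq_def)
  show "sgn a = inverse (norm a) *\<^sub>R a" by (simp add: sgn_sq_def)
  show "(uniformity :: ('a sq \<times> 'a sq) filter) = (INF e\<in>{0<..}. principal {(x, y). dist x y < e})"
    by (simp add: uniformity_sq_def)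
  show "open U = (\<forall>x\<in>U. \<forall>\<^sub>F (x', y) in uniformity. x' = x \<longrightarrow> y \<in> U)" for U :: "'a sq set"
    by (simp add: open_sq_def)
  show "(norm a = 0) = (a = 0)" by transfer simp
  show "norm (a + b) \<le> norm a + norm b" by transfer (rule norm_triangle_ineq)
  show "norm (r *\<^sub>R a) = \<bar>r\<bar> * norm a" by transfer simp
qed
end

instantiation sq :: (finite) real_normed_algebra_1
begin
lift_definition times_sq :: "'a sq \<Rightarrow> 'a sq \<Rightarrow> 'a sq" is "blinfun_compose" .
lift_definition one_sq :: "'a sq" is "id_blinfun" .
instance
proof
  fix a b c :: "'a sq" and r :: real
  show "a * b * c = a * (b * c)" by transfer (auto intro!: blinfun_eqI)
  show "(a + b) * c = a * c + b * c" by transfer (auto intro!: blinfun_eqI simp: blinfun.bilinear_simps)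
  show "a * (b + c) = a * b + a * c" by transfer (auto intro!: blinfun_eqI simp: blinfun.bilinear_simps)
  show "1 * a = a" by transfer (auto intro!: blinfun_eqI)
  show "a * 1 = a" by transfer (auto intro!: blinfun_eqI)
  show "scaleR r a * b = scaleR r (a * b)" by transfer (auto intro!: blinfun_eqI simp: blinfun.bilinear_simps)
  show "a * scaleR r b = scaleR r (a * b)" by transfer (auto intro!: blinfun_eqI simp: blinfun.bilinear_simps)
  show "norm (a * b) \<le> norm a * norm b" by transfer (rule norm_blinfun_compose)
  show "norm (1::'a sq) = 1" by transfer simp
  show "(0::'a sq) \<noteq> 1"
  proof transfer
    show "(0::(real^'a) \<Rightarrow>\<^sub>L (real^'a)) \<noteq> id_blinfun"
      by (metis blinfun.zero_left blinfun_apply_id_blinfun axis_eq_0_iff one_neq_zero)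
  qed
qed
end

lemma dist_sq_Rep: "dist x y = dist (Rep_sq x) (Rep_sq y)"
  by (simp add: dist_sq_def dist_norm norm_sq.rep_eq minus_sq.rep_eq)

instance sq :: (finite) banach
proof
  fix X :: "nat \<Rightarrow> 'a sq"
  assume "Cauchy X"
  hence "Cauchy (\<lambda>n. Rep_sq (X n))"
    unfolding Cauchy_def dist_sq_Rep .
  then obtain L where L: "(\<lambda>n. Rep_sq (X n)) \<longlonglongrightarrow> L" using convergent_eq_Cauchy convergent_def by blast
  have "X \<longlonglongrightarrow> Abs_sq L"
    using L unfolding tendsto_iff dist_sq_Rep by (simp add: Abs_sq_inverse)
  thus "convergent X" unfolding convergent_def by blast
qed


definition app :: "'n::finite sq \<Rightarrow> real^'n \<Rightarrow> real^'n" where "app X v = blinfun_apply (Rep_sq X) v"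
definition sqm :: "real^'n^'n \<Rightarrow> 'n::finite sq" where "sqm A = Abs_sq (Blinfun (\<lambda>v. A *v v))"
definition Et :: "real \<Rightarrow> real^'n^'n \<Rightarrow> 'n::finite sq" where "Et t A = exp (t *\<^sub>R sqm A)"

lemma app_sqm[simp]: "app (sqm A) v = A *v v"
  by (simp add: app_def sqm_def Abs_sq_inverse bounded_linear_Blinfun_apply)
lemma app_mult[simp]: "app (X * Y) v = app X (app Y v)" by (simp add: app_def times_sq.rep_eq)
lemma app_one[simp]: "app 1 v = v" by (simp add: app_def one_sq.rep_eq)
lemma app_scaleR[simp]: "app (r *\<^sub>R X) v = r *\<^sub>R app X v" by (simp add: app_def scaleR_sq.rep_eq blinfun.scaleR_left)
lemma app_of_real: "app (of_real r) v = r *\<^sub>R v" by (simp add: of_real_def)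
lemma app_add_right: "app X (v + w) = app X v + app X w" by (simp add: app_def blinfun.add_right)
lemma app_diff_right: "app X (v - w) = app X v - app X w" by (simp add: app_def blinfun.diff_right)
lemma app_scale_right: "app X (r *\<^sub>R v) = r *\<^sub>R app X v" by (simp add: app_def blinfun.scaleR_right)
lemma app_sum_right: "app X (sum f S) = sum (\<lambda>x. app X (f x)) S" by (simp add: app_def blinfun.sum_right)
lemma app_zero_right[simp]: "app X 0 = 0" by (simp add: app_def)

lemma bl_Rep: "bounded_linear (Rep_sq :: 'n::finite sq \<Rightarrow> _)"
  by (rule bounded_linear_intro[of _ 1]) (auto simp: plus_sq.rep_eq scaleR_sq.rep_eq norm_sq.rep_eq)

lemma bl_app: "bounded_linear (\<lambda>X::'n::finite sq. app X v $ a)"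
  unfolding app_def
  by (rule bounded_linear_compose[OF bounded_linear_vec_nth])
     (rule bounded_linear_compose[OF blinfun.bounded_linear_left bl_Rep])

lemma app_pow: "app (sqm A ^ n) v = mpow A n *v v"
  by (induction n) (simp_all add: mpow_def matrix_vector_mul_assoc)

lemma exp_sums:
  fixes L :: "'n::finite sq" and \<psi> :: "'n sq \<Rightarrow> real"
  assumes "bounded_linear \<psi>"
  shows "(\<lambda>n. t^n / fact n * \<psi> (L^n)) sums \<psi> (exp (t *\<^sub>R L))"
proof -
  have "(\<lambda>n. \<psi> ((t *\<^sub>R L)^n /\<^sub>R fact n)) sums \<psi> (exp (t *\<^sub>R L))"
    by (rule bounded_linear.sums[OF assms exp_converges])
  moreover have "\<psi> ((t *\<^sub>R L)^n /\<^sub>R fact n) = t^n / fact n * \<psi> (L^n)" for n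
    proof -
    have "\<psi> ((t *\<^sub>R L)^n /\<^sub>R fact n) = \<psi> ((inverse (fact n) * t^n) *\<^sub>R L^n)" by simp
    also have "\<dots> = (inverse (fact n) * t^n) * \<psi> (L^n)"
      using real_vector.linear_scale[OF bounded_linear.linear[OF assms]] by simp
    finally show ?thesis by (simp add: divide_inverse mult.commute)
  qed
  ultimately show ?thesis by simp
qed

lemma mv_axis: "(M *v axis b 1) $ a = M $ a $ (b::'n::finite)"
  by (simp add: matrix_vector_mult_def axis_def if_distrib cong: if_cong)

lemma mexp_sums: "(\<lambda>n. t^n / fact n * (mpow A n $ a $ b)) sums (app (Et t A) (axis b 1) $ a)"
  using exp_sums[OF bl_app, of t "sqm A" "axis b 1" a] by (simp add: Et_def app_pow mv_axis)

lemma mexp_eq: "mexp t A $ a $ b = app (Et t A) (axis b 1) $ a"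
  unfolding mexp_def using sums_unique[OF mexp_sums[of t A a b]] by simp

lemma mexp_mv: "mexp t A *v v = app (Et t A) v"
proof -
  have "app (Et t A) v = app (Et t A) (\<Sum>b\<in>UNIV. v$b *\<^sub>R axis b 1)"
    using basis_expansion[of v] by (simp add: scalar_mult_eq_scaleR)
  also have "\<dots> = (\<Sum>b\<in>UNIV. v$b *\<^sub>R app (Et t A) (axis b 1))"
    by (simp add: app_sum_right app_scale_right)
  finally show ?thesis
    by (simp add: vec_eq_iff matrix_vector_mult_def mexp_eq sum_component mult.commute)
qed



lemma app_add_left: "app (X + Y) v = app X v + app Y v" by (simp add: app_def plus_sq.rep_eq blinfun.add_left)

lemma app_ext: "(\<And>v. app X v = app Y v) \<Longrightarrow> X = Y"
  unfolding app_def by (metis Rep_sq_inject blinfun_eqI)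

lemma Et_add: "Et (s + t) A = Et s A * Et t A"
  unfolding Et_def by (simp add: scaleR_add_left exp_add_commuting)

lemma Et_zero[simp]: "Et 0 A = 1"
  unfolding Et_def by simp

lemma Et_commute: "app (Et t A) (A *v v) = A *v app (Et t A) v"
proof -
  have "app (Et t A * sqm A) v = app (sqm A * Et t A) v"
    unfolding Et_def by (simp only: exp_times_scaleR_commute)
  thus ?thesis by simp
qed

lemma Et_deriv:
  "((\<lambda>t. app (Et t A) v $ a) has_real_derivative app (Et t A) (A *v v) $ a) (at t within S)"
proof -
  have "((\<lambda>t. Et t A) has_vector_derivative Et t A * sqm A) (at t within S)"
    unfolding Et_def by (rule exp_scaleR_has_vector_derivative_right)
  from bounded_linear.has_vector_derivative[OF bl_app this, of v a]
  show ?thesis by (simp add: has_real_derivative_iff_has_vector_derivative)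
qed

lemma Et_cont: "continuous_on S (\<lambda>t. app (Et t A) v $ a)"
  by (intro continuous_at_imp_continuous_on ballI DERIV_continuous[OF Et_deriv[where S=UNIV]])

lemma smat_mv: "(c *\<^sub>R mat 1 :: real^'n::finite^'n) *v v = c *\<^sub>R v"
  by (metis matrix_vector_mul_lid scaleR_matrix_vector_assoc)

lemma sqm_shift: "sqm (A + c *\<^sub>R mat 1) = sqm A + of_real c"
  by (rule app_ext) (simp add: app_add_left app_of_real matrix_vector_mult_add_rdistrib
      smat_mv)

lemma Et_shift: "app (Et t (A + c *\<^sub>R mat 1)) v = exp (t * c) *\<^sub>R app (Et t A) v"
proof -
  have "exp (t *\<^sub>R sqm (A + c *\<^sub>R mat 1)) = exp (t *\<^sub>R sqm A + of_real (t * c))"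
    by (simp add: sqm_shift scaleR_add_right of_real_def)
  also have "\<dots> = exp (t *\<^sub>R sqm A) * exp (of_real (t * c))"
    by (rule exp_add_commuting) (simp add: of_real_def)
  also have "\<dots> = exp (t *\<^sub>R sqm A) * of_real (exp (t * c))"
    by (simp only: exp_of_real)
  finally show ?thesis unfolding Et_def by (simp add: app_of_real app_scale_right)
qed

lemma exp_kill:
  fixes L :: "'n::finite sq" and \<psi> :: "'n sq \<Rightarrow> real"
  assumes "bounded_linear \<psi>" "\<And>n. \<psi> (L ^ Suc n) = 0"
  shows "\<psi> (exp (t *\<^sub>R L)) = \<psi> 1"
proof -
  have "(\<lambda>n. t^n / fact n * \<psi> (L^n)) = (\<lambda>n. if n = 0 then \<psi> 1 else 0)"
  proof
    fix n show "t^n / fact n * \<psi> (L^n) = (if n = 0 then \<psi> 1 else 0)"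
      using assms(2)[of "n - 1"] by (cases n) auto
  qed
  hence "(\<lambda>n. if n = 0 then \<psi> 1 else 0) sums \<psi> (exp (t *\<^sub>R L))"
    using exp_sums[OF assms(1), of t L] by simp
  moreover have "(\<lambda>n. if n = 0 then \<psi> 1 else 0) sums \<psi> 1"
    using sums_single[of 0 "\<lambda>_. \<psi> 1"] by simp
  ultimately show ?thesis using sums_unique2 by blast
qed

lemma mpow_Suc: "mpow M (Suc n) = M ** mpow M n" by (simp add: mpow_def)
lemma mpow_0: "mpow M 0 = mat 1" by (simp add: mpow_def)

lemma mpow_nonneg: "(\<And>a b. 0 \<le> M$a$b) \<Longrightarrow> 0 \<le> mpow M n $ a $ b"
  by (induction n arbitrary: a b)
     (auto simp: mpow_0 mpow_Suc mat_def matrix_matrix_mult_def intro!: sum_nonneg)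

lemma mexp_sums': "(\<lambda>n. t^n / fact n * (mpow A n $ a $ b)) sums (mexp t A $ a $ b)"
  using mexp_sums[of t A a b] by (simp add: mexp_eq)

lemma mexp_nonneg:
  assumes "\<And>a b. 0 \<le> M$a$b" "0 \<le> t" shows "0 \<le> mexp t M $ a $ b"
  using sums_le[OF _ sums_zero mexp_sums'[of t M a b]] assms mpow_nonneg[of M]
  by (simp add: mult_nonneg_nonneg)

lemma mexp_pos:
  assumes "\<And>a b. 0 \<le> M$a$b" "0 < t" "0 < mpow M n $ a $ b" shows "0 < mexp t M $ a $ b"
proof -
  have "0 < (\<Sum>n. t^n / fact n * (mpow M n $ a $ b))"
    by (rule suminf_pos2[where i=n]) (use assms mpow_nonneg[of M] sums_summable[OF mexp_sums'] in auto)
  thus ?thesis using sums_unique[OF mexp_sums'] by metis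
qed

definition l1 :: "real^'n::finite \<Rightarrow> real" where "l1 v = (\<Sum>a\<in>UNIV. \<bar>v $ a\<bar>)"

lemma l1_nonneg: "0 \<le> l1 v" unfolding l1_def by (simp add: sum_nonneg)

lemma l1_nonexp:
  assumes "\<And>a b. 0 \<le> P$a$b" "\<And>b. (\<Sum>a\<in>UNIV. P$a$b) = 1"
  shows "l1 (P *v v) \<le> l1 v"
proof -
  have "l1 (P *v v) = (\<Sum>a\<in>UNIV. \<bar>\<Sum>b\<in>UNIV. P$a$b * v$b\<bar>)"
    by (simp add: l1_def matrix_vector_mult_def)
  also have "\<dots> \<le> (\<Sum>a\<in>UNIV. \<Sum>b\<in>UNIV. P$a$b * \<bar>v$b\<bar>)"
    by (intro sum_mono order_trans[OF sum_abs]) (simp add: abs_mult assms(1))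
  also have "\<dots> = (\<Sum>b\<in>UNIV. (\<Sum>a\<in>UNIV. P$a$b) * \<bar>v$b\<bar>)"
    by (subst sum.swap) (simp add: sum_distrib_right)
  also have "\<dots> = l1 v" by (simp add: assms(2) l1_def)
  finally show ?thesis .
qed

lemma l1_contr:
  fixes P :: "real^'n::finite^'n" and v :: "real^'n"
  assumes "\<And>a b. e \<le> P$a$b" "\<And>b. (\<Sum>a\<in>UNIV. P$a$b) = 1" "(\<Sum>a\<in>UNIV. v$a) = 0"
  shows "l1 (P *v v) \<le> (1 - real CARD('n) * e) * l1 v"
proof -
  have eq: "(P *v v) $ a = (\<Sum>b\<in>UNIV. (P$a$b - e) * v$b)" for a
  proof -
    have "(\<Sum>b\<in>UNIV. (P$a$b - e) * v$b) = (\<Sum>b\<in>UNIV. P$a$b * v$b) - e * (\<Sum>b\<in>UNIV. v$b)"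
      by (simp add: algebra_simps sum_subtractf sum_distrib_left)
    thus ?thesis using assms(3) by (simp add: matrix_vector_mult_def)
  qed
  have "l1 (P *v v) = (\<Sum>a\<in>UNIV. \<bar>\<Sum>b\<in>UNIV. (P$a$b - e) * v$b\<bar>)"
    by (simp add: l1_def eq)
  also have "\<dots> \<le> (\<Sum>a\<in>UNIV. \<Sum>b\<in>UNIV. (P$a$b - e) * \<bar>v$b\<bar>)"
    by (intro sum_mono order_trans[OF sum_abs]) (use assms(1) in \<open>simp add: abs_mult\<close>)
  also have "\<dots> = (\<Sum>b\<in>UNIV. (\<Sum>a\<in>UNIV. P$a$b - e) * \<bar>v$b\<bar>)"
    by (subst sum.swap) (simp add: sum_distrib_right)
  also have "\<dots> = (\<Sum>b\<in>UNIV. (1 - real CARD('n) * e) * \<bar>v$b\<bar>)"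
    by (simp add: sum_subtractf assms(2))
  also have "\<dots> = (1 - real CARD('n) * e) * l1 v" by (simp add: l1_def sum_distrib_left)
  finally show ?thesis .
qed



lemma colsum_R: "rate_matrix R \<Longrightarrow> (\<Sum>a\<in>UNIV. R$a$b) = 0"
  unfolding rate_matrix_def using sum.remove[of UNIV b "\<lambda>a. R$a$b"] by simp

lemma colsum_Rv: assumes "rate_matrix R" shows "(\<Sum>a\<in>UNIV. (R *v w)$a) = 0"
proof -
  have "(\<Sum>a\<in>UNIV. (R *v w)$a) = (\<Sum>b\<in>UNIV. (\<Sum>a\<in>UNIV. R$a$b) * w$b)"
    by (simp add: matrix_vector_mult_def sum_distrib_right) (rule sum.swap)
  thus ?thesis using colsum_R[OF assms] by simp
qed

lemma Et_sum: assumes "rate_matrix R" shows "(\<Sum>a\<in>UNIV. app (Et t R) v $ a) = (\<Sum>a\<in>UNIV. v $ a)"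
proof -
  have bl: "bounded_linear (\<lambda>X. \<Sum>a\<in>UNIV. app X v $ a)"
    by (intro bounded_linear_sum bl_app)
  have "(\<lambda>X. \<Sum>a\<in>UNIV. app X v $ a) (exp (t *\<^sub>R sqm R)) = (\<lambda>X. \<Sum>a\<in>UNIV. app X v $ a) 1"
    by (rule exp_kill[OF bl]) (simp add: colsum_Rv[OF assms])
  thus ?thesis by (simp add: Et_def)
qed

lemma Et_ker: assumes "R *v v = 0" shows "app (Et t R) v = v"
proof -
  have "app (exp (t *\<^sub>R sqm R)) v $ a = app 1 v $ a" for a
    by (rule exp_kill[OF bl_app]) (simp only: power_Suc2 app_mult app_sqm assms app_zero_right zero_index)
  thus ?thesis by (simp add: Et_def vec_eq_iff)
qed

lemma path_pos:
  assumes nn: "\<And>a b. 0 \<le> M$a$b" and off: "\<And>x y. x \<noteq> y \<Longrightarrow> M$x$y = R$x$y"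
    and p: "(b, a) \<in> {(y, x). x \<noteq> y \<and> R $ x $ y > 0}\<^sup>*"
  shows "\<exists>n. 0 < mpow M n $ a $ b"
  using p
proof (induction rule: rtrancl_induct)
  case base
  show ?case by (rule exI[of _ 0]) (simp add: mpow_0 mat_def)
next
  case (step y z)
  then obtain n where n: "0 < mpow M n $ y $ b" by blast
  from step have zy: "z \<noteq> y" "0 < R$z$y" by auto
  have "M$z$y * mpow M n $ y $ b \<le> (\<Sum>d\<in>UNIV. M$z$d * mpow M n $ d $ b)"
    by (rule member_le_sum) (auto simp: nn mpow_nonneg)
  moreover have "0 < M$z$y * mpow M n $ y $ b" using zy off n by simp
  ultimately have "0 < mpow M (Suc n) $ z $ b"
    by (simp add: mpow_Suc matrix_matrix_mult_def)
  thus ?case by blast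
qed

lemma shift_facts:
  assumes "rate_matrix R"
  obtains c M where "\<And>a b. 0 \<le> M$a$b" "\<And>x y. x \<noteq> y \<Longrightarrow> M$x$y = R$x$y"
    "\<And>t a b. mexp t R $ a $ b = exp (- (t * c)) * mexp t M $ a $ b"
proof -
  define c where "c = (\<Sum>b\<in>UNIV. \<bar>R$b$b\<bar>)"
  define M where "M = R + c *\<^sub>R mat 1"
  have "0 \<le> M$a$b" for a b
  proof (cases "a = b")
    case True
    have "\<bar>R$b$b\<bar> \<le> c" unfolding c_def by (rule member_le_sum) auto
    thus ?thesis using True by (simp add: M_def mat_def)
  next
    case False
    thus ?thesis using assms by (simp add: M_def mat_def rate_matrix_def)
  qed
  moreover have "\<And>x y. x \<noteq> y \<Longrightarrow> M$x$y = R$x$y" by (simp add: M_def mat_def)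
  moreover have "mexp t R $ a $ b = exp (- (t * c)) * mexp t M $ a $ b" for t a b
  proof -
    have "R = M + (- c) *\<^sub>R mat 1" by (simp add: M_def)
    hence "app (Et t R) (axis b 1) = exp (t * - c) *\<^sub>R app (Et t M) (axis b 1)"
      using Et_shift[of t M "- c"] by simp
    thus ?thesis by (simp add: mexp_eq)
  qed
  ultimately show ?thesis using that by blast
qed

lemma mexp_R_nonneg: "rate_matrix R \<Longrightarrow> 0 \<le> t \<Longrightarrow> 0 \<le> mexp t R $ a $ b"
  by (metis (no_types, lifting) shift_facts exp_ge_zero mexp_nonneg mult_nonneg_nonneg)

lemma mexp_R_pos: "rate_matrix R \<Longrightarrow> irreducible_rates R \<Longrightarrow> 0 < t \<Longrightarrow> 0 < mexp t R $ a $ b"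
proof -
  assume r: "rate_matrix R" and i: "irreducible_rates R" and t: "0 < t"
  obtain c M where nn: "\<And>a b. 0 \<le> M$a$b" and off: "\<And>x y. x \<noteq> y \<Longrightarrow> M$x$y = R$x$y"
    and eq: "\<And>t a b. mexp t R $ a $ b = exp (- (t * c)) * mexp t M $ a $ b"
    using shift_facts[OF r] by metis
  obtain n where "0 < mpow M n $ a $ b"
    using path_pos[OF nn off] i unfolding irreducible_rates_def by blast
  hence "0 < mexp t M $ a $ b" using mexp_pos[OF nn t] by blast
  thus ?thesis by (simp add: eq)
qed

lemma mexp_colsum: "rate_matrix R \<Longrightarrow> (\<Sum>a\<in>UNIV. mexp t R $ a $ b) = 1"
  using Et_sum[of R t "axis b 1"] by (simp add: mexp_eq axis_def)

lemma decay:
  assumes r: "rate_matrix R" and i: "irreducible_rates R"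
  obtains \<rho> where "0 < \<rho>" "\<rho> < 1"
    "\<And>v t n. (\<Sum>a\<in>UNIV. v$a) = 0 \<Longrightarrow> real n \<le> t \<Longrightarrow> l1 (app (Et t R) v) \<le> \<rho>^n * l1 v"
proof -
  define S where "S = (\<lambda>(a, b). mexp 1 R $ a $ b) ` UNIV"
  define e where "e = Min S"
  have fin: "finite S" "S \<noteq> {}" unfolding S_def by auto
  have epos: "0 < e" unfolding e_def using fin mexp_R_pos[OF r i] by (auto simp: S_def Min_gr_iff)
  have ele: "e \<le> mexp 1 R $ a $ b" for a b unfolding e_def using fin by (auto simp: S_def intro!: Min_le)
  define \<rho> where "\<rho> = max (1 - real CARD('a) * e) (1/2)"
  have "0 < \<rho>" "\<rho> < 1" unfolding \<rho>_def using epos by auto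
  moreover have "l1 (app (Et t R) v) \<le> \<rho>^n * l1 v"
    if "(\<Sum>a\<in>UNIV. v$a) = 0" "real n \<le> t" for v t n
    using that(2)
  proof (induction n arbitrary: t)
    case 0
    have "l1 (app (Et t R) v) = l1 (mexp t R *v v)" by (simp add: mexp_mv)
    also have "\<dots> \<le> l1 v"
      by (rule l1_nonexp) (use 0 mexp_R_nonneg[OF r] mexp_colsum[OF r] in auto)
    finally show ?case by simp
  next
    case (Suc n)
    define w where "w = app (Et (t - 1) R) v"
    have sw: "(\<Sum>a\<in>UNIV. w$a) = 0" unfolding w_def using Et_sum[OF r] that(1) by simp
    have "Et t R = Et 1 R * Et (t - 1) R" using Et_add[of 1 "t - 1" R] by simp
    hence "l1 (app (Et t R) v) = l1 (mexp 1 R *v w)" by (simp add: w_def mexp_mv)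
    also have "\<dots> \<le> (1 - real CARD('a) * e) * l1 w"
      by (rule l1_contr) (use ele mexp_colsum[OF r] sw in auto)
    also have "\<dots> \<le> \<rho> * l1 w" unfolding \<rho>_def by (intro mult_right_mono l1_nonneg) auto
    also have "\<dots> \<le> \<rho> * (\<rho>^n * l1 v)"
      using Suc.IH[of "t - 1"] Suc.prems \<open>0 < \<rho>\<close> unfolding w_def by (intro mult_left_mono) auto
    finally show ?case by simp
  qed
  ultimately show ?thesis using that by blast
qed



lemma kerzero:
  assumes r: "rate_matrix R" and i: "irreducible_rates R" and k: "R *v v = 0" and s: "(\<Sum>a\<in>UNIV. v$a) = 0"
  shows "v = 0"
proof -
  obtain \<rho> where \<rho>: "0 < \<rho>" "\<rho> < 1"
    "\<And>v t n. (\<Sum>a\<in>UNIV. v$a) = 0 \<Longrightarrow> real n \<le> t \<Longrightarrow> l1 (app (Et t R) v) \<le> \<rho>^n * l1 v"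
    using decay[OF r i] by metis
  have "l1 v \<le> \<rho> * l1 v" using \<rho>(3)[OF s, of 1 1] Et_ker[OF k] by simp
  hence "l1 v \<le> 0" using \<rho>(2) l1_nonneg[of v]
    by (metis le_less_trans linorder_not_less mult_le_cancel_right1 not_le)
  hence "l1 v = 0" using l1_nonneg[of v] by linarith
  hence "\<forall>a\<in>UNIV. \<bar>v$a\<bar> = 0" unfolding l1_def by (subst sum_nonneg_eq_0_iff[symmetric]) auto
  thus ?thesis by (simp add: vec_eq_iff)
qed

lemma stat:
  assumes r: "rate_matrix R" and i: "irreducible_rates R"
  shows "R *v stat_dist R = 0" "(\<Sum>a\<in>UNIV. stat_dist R $ a) = 1"
proof -
  have "\<exists>p. p \<noteq> 0 \<and> R *v p = 0"
  proof (rule ccontr)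
    assume "\<not> ?thesis"
    hence "\<forall>x. R *v x = 0 \<longrightarrow> x = 0" by blast
    then obtain B where "B ** R = mat 1" using matrix_left_invertible_ker by blast
    hence RB: "R ** B = mat 1" using matrix_left_right_inverse by blast
    have z: "(vec 1 :: real^'a) v* R = 0"
      using colsum_R[OF r] by (simp add: vec_eq_iff vector_matrix_mult_def)
    have "(vec 1 :: real^'a) = vec 1 v* (R ** B)" by (simp add: RB)
    also have "\<dots> = (vec 1 v* R) v* B" by (simp add: vector_matrix_mul_assoc)
    also have "\<dots> = 0" by (simp only: z) (simp add: vec_eq_iff vector_matrix_mult_def)
    finally show False by (simp add: vec_eq_iff)
  qed
  then obtain p where p: "p \<noteq> 0" "R *v p = 0" by blast
  define s where "s = (\<Sum>a\<in>UNIV. p$a)"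
  have "s \<noteq> 0"
  proof
    assume "s = 0"
    hence "p = 0" using kerzero[OF r i p(2)] unfolding s_def by blast
    thus False using p(1) by blast
  qed
  define q where "q = (1/s) *\<^sub>R p"
  have q1: "R *v q = 0" unfolding q_def by (simp add: matrix_vector_mult_scaleR p(2))
  have "(\<Sum>a\<in>UNIV. q$a) = (\<Sum>a\<in>UNIV. p$a) / s" by (simp add: q_def sum_divide_distrib)
  hence q2: "(\<Sum>a\<in>UNIV. q$a) = 1" using \<open>s \<noteq> 0\<close> unfolding s_def by simp
  have uq: "x = q" if x: "R *v x = 0 \<and> (\<Sum>a\<in>UNIV. x$a) = 1" for x
  proof -
    have "R *v (x - q) = 0" using x q1 by (simp add: matrix_vector_mult_diff_distrib)
    moreover have "(\<Sum>a\<in>UNIV. (x - q)$a) = 0" using x q2 by (simp add: sum_subtractf)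
    ultimately have "x - q = 0" by (rule kerzero[OF r i])
    thus ?thesis by simp
  qed
  have "stat_dist R = q" unfolding stat_dist_def
    by (rule the_equality) (use q1 q2 uq in blast)+
  thus "R *v stat_dist R = 0" "(\<Sum>a\<in>UNIV. stat_dist R $ a) = 1" using q1 q2 by auto
qed

lemma bound:
  assumes r: "rate_matrix R" and i: "irreducible_rates R"
  obtains \<alpha> C where "0 < \<alpha>" "0 \<le> C"
    "\<And>v t a. (\<Sum>a\<in>UNIV. v$a) = 0 \<Longrightarrow> 0 \<le> t \<Longrightarrow> \<bar>app (Et t R) v $ a\<bar> \<le> C * l1 v * exp (- \<alpha> * t)"
    "\<And>v a. (\<Sum>a\<in>UNIV. v$a) = 0 \<Longrightarrow> (\<lambda>n. app (Et (real n) R) v $ a) \<longlonglongrightarrow> 0"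
proof -
  obtain \<rho> where \<rho>: "0 < \<rho>" "\<rho> < 1"
    "\<And>v t n. (\<Sum>a\<in>UNIV. v$a) = 0 \<Longrightarrow> real n \<le> t \<Longrightarrow> l1 (app (Et t R) v) \<le> \<rho>^n * l1 v"
    using decay[OF r i] by metis
  define \<alpha> where "\<alpha> = - ln \<rho>"
  have apos: "0 < \<alpha>" unfolding \<alpha>_def using \<rho> by simp
  have comp: "\<bar>w $ a\<bar> \<le> l1 w" for w :: "real^'a" and a
    unfolding l1_def by (rule member_le_sum) auto
  have B: "\<bar>app (Et t R) v $ a\<bar> \<le> (1/\<rho>) * l1 v * exp (- \<alpha> * t)"
    if s: "(\<Sum>a\<in>UNIV. v$a) = 0" and t: "0 \<le> t" for v t a
  proof -
    define n where "n = nat \<lfloor>t\<rfloor>"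
    have n1: "real n \<le> t" "t - 1 \<le> real n" unfolding n_def using t by linarith+
    have "\<bar>app (Et t R) v $ a\<bar> \<le> \<rho>^n * l1 v" using comp \<rho>(3)[OF s n1(1)] order_trans by blast
    also have "\<rho>^n = exp (real n * ln \<rho>)" using \<rho>(1) by (simp add: exp_of_nat_mult)
    also have "\<dots> \<le> exp ((t - 1) * ln \<rho>)"
      using n1(2) \<rho> by (intro exp_mono mult_right_mono_neg) auto
    also have "exp ((t - 1) * ln \<rho>) = (1/\<rho>) * exp (- \<alpha> * t)"
      using \<rho>(1) by (simp add: \<alpha>_def algebra_simps exp_diff)
    finally show ?thesis using l1_nonneg[of v] by (simp add: mult_right_mono mult.commute mult.left_commute)
  qed
  have L: "(\<lambda>n. app (Et (real n) R) v $ a) \<longlonglongrightarrow> 0" if s: "(\<Sum>a\<in>UNIV. v$a) = 0" for v a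
  proof (rule Lim_null_comparison)
    show "\<forall>\<^sub>F n in sequentially. norm (app (Et (real n) R) v $ a) \<le> \<rho>^n * l1 v"
    proof (rule eventuallyI)
      fix n
      have "\<bar>app (Et (real n) R) v $ a\<bar> \<le> l1 (app (Et (real n) R) v)" by (rule comp)
      also have "\<dots> \<le> \<rho>^n * l1 v" by (rule \<rho>(3)[OF s]) simp
      finally show "norm (app (Et (real n) R) v $ a) \<le> \<rho>^n * l1 v" by simp
    qed
    show "(\<lambda>n. \<rho>^n * l1 v) \<longlonglongrightarrow> 0"
      using \<rho> by (intro tendsto_mult_left_zero LIMSEQ_power_zero) auto
  qed
  show ?thesis using that[OF apos _ B L] \<rho>(1) by simp
qed

lemma integrable_Et:
  assumes r: "rate_matrix R" and i: "irreducible_rates R" and s: "(\<Sum>a\<in>UNIV. v$a) = 0"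
  shows "(\<lambda>t. app (Et t R) v $ a) integrable_on {0..}"
proof -
  obtain \<alpha> C where b: "0 < \<alpha>" "0 \<le> C"
    "\<And>v t a. (\<Sum>a\<in>UNIV. v$a) = 0 \<Longrightarrow> 0 \<le> t \<Longrightarrow> \<bar>app (Et t R) v $ a\<bar> \<le> C * l1 v * exp (- \<alpha> * t)"
    using bound[OF r i] by metis
  have "(\<lambda>t. app (Et t R) v $ a) absolutely_integrable_on {0..}"
  proof (rule measurable_bounded_by_integrable_imp_absolutely_integrable)
    show "(\<lambda>t. app (Et t R) v $ a) \<in> borel_measurable (lebesgue_on {0..})"
      by (rule continuous_imp_measurable_on_sets_lebesgue[OF Et_cont]) simp
    show "{0::real..} \<in> sets lebesgue" by simp
    show "(\<lambda>t. C * l1 v * exp (- \<alpha> * t)) integrable_on {0..}"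
      using integrable_on_cmult_left[OF integrable_on_exp_minus_to_infinity[OF b(1), of 0], of "C * l1 v"]
      by simp
    show "norm (app (Et t R) v $ a) \<le> C * l1 v * exp (- \<alpha> * t)" if "t \<in> {0..}" for t
      using b(3)[OF s, of t a] that by simp
  qed
  thus ?thesis using set_lebesgue_integral_eq_integral(1) by blast
qed

lemma ftc_inf:
  fixes g g' h :: "real \<Rightarrow> real"
  assumes d: "\<And>t. 0 \<le> t \<Longrightarrow> (g has_real_derivative g' t) (at t within {0..})"
    and hb: "\<And>t. 0 \<le> t \<Longrightarrow> \<bar>g' t\<bar> \<le> h t" and hi: "h integrable_on {0..}"
    and lim: "(\<lambda>n. g (real n)) \<longlonglongrightarrow> G"
  shows "integral {0..} g' = G - g 0"
proof -
  define f where "f k = (\<lambda>t. if t \<in> {0..real k} then g' t else 0)" for k :: nat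
  have fk: "(f k has_integral (g (real k) - g 0)) {0..}" for k
  proof -
    have "(g' has_integral (g (real k) - g 0)) {0..real k}"
    proof (rule fundamental_theorem_of_calculus)
      show "(g has_vector_derivative g' x) (at x within {0..real k})" if "x \<in> {0..real k}" for x
        using DERIV_subset[OF d[of x]] that
        by (auto simp: has_real_derivative_iff_has_vector_derivative)
    qed simp
    hence "(g' has_integral (g (real k) - g 0)) ({0..real k} \<inter> {0..})"
      by (simp add: Int_absorb2 subset_eq)
    thus ?thesis unfolding f_def by (subst has_integral_restrict_Int)
  qed
  have dc: "(\<lambda>k. integral {0..} (f k)) \<longlonglongrightarrow> integral {0..} g'"
  proof (rule dominated_convergence(2))
    show "f k integrable_on {0..}" for k using fk by blast
    show "h integrable_on {0..}" by (rule hi)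
    show "norm (f k x) \<le> h x" if "x \<in> {0..}" for k x
      using hb[of x] that by (auto simp: f_def)
    show "(\<lambda>k. f k x) \<longlonglongrightarrow> g' x" if "x \<in> {0..}" for x
    proof (rule tendsto_eventually)
      show "\<forall>\<^sub>F k in sequentially. f k x = g' x"
        unfolding eventually_sequentially
      proof (intro exI allI impI)
        fix n assume "nat \<lceil>x\<rceil> \<le> n"
        hence "x \<le> real n" using real_nat_ceiling_ge[of x] of_nat_mono[of "nat \<lceil>x\<rceil>" n] by linarith
        thus "f n x = g' x" using that by (simp add: f_def)
      qed
    qed
  qed
  moreover have "(\<lambda>k. integral {0..} (f k)) \<longlonglongrightarrow> G - g 0"
  proof -
    have "integral {0..} (f k) = g (real k) - g 0" for k using fk by (rule integral_unique)
    moreover have "(\<lambda>k. g (real k) - g 0) \<longlonglongrightarrow> G - g 0" by (intro tendsto_diff lim tendsto_const)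
    ultimately show ?thesis by simp
  qed
  ultimately show ?thesis using LIMSEQ_unique by blast
qed



lemma fund_w:
  fixes R :: "real^'n::finite^'n" and i j :: 'n
  assumes r: "rate_matrix R" and i: "irreducible_rates R"
  defines "u \<equiv> axis i 1 - axis j 1"
    and "w \<equiv> (\<chi> k. fund_matrix R $ k $ i - fund_matrix R $ k $ j)"
  shows "R *v w = - u" "(\<Sum>a\<in>UNIV. w$a) = 0"
proof -
  define \<pi> where "\<pi> = stat_dist R"
  have pi: "R *v \<pi> = 0" "(\<Sum>a\<in>UNIV. \<pi>$a) = 1" using stat[OF r i] by (auto simp: \<pi>_def)
  have ax: "(\<Sum>a\<in>UNIV. axis b 1 $ a) = (1::real)" for b :: 'n by (simp add: axis_def)
  have sb: "(\<Sum>a\<in>UNIV. (axis b 1 - \<pi>) $ a) = 0" for b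
    using pi(2) ax[of b] by (simp add: sum_subtractf)
  have su: "(\<Sum>a\<in>UNIV. u $ a) = 0" unfolding u_def using ax[of i] ax[of j] by (simp add: sum_subtractf)
  have hZ: "fund_matrix R $ a $ b = integral {0..} (\<lambda>t. app (Et t R) (axis b 1 - \<pi>) $ a)" for a b
    unfolding fund_matrix_def \<pi>_def[symmetric]
    by (simp add: mexp_eq app_diff_right Et_ker[OF pi(1)])
  have FI: "(\<lambda>t. app (Et t R) (axis b 1 - \<pi>) $ a) integrable_on {0..}" for a b
    by (rule integrable_Et[OF r i sb])
  have GI: "(\<lambda>t. app (Et t R) u $ a) integrable_on {0..}" for a
    by (rule integrable_Et[OF r i su])
  have hw: "w$a = integral {0..} (\<lambda>t. app (Et t R) u $ a)" for a
  proof -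
    have "w$a = integral {0..} (\<lambda>t. app (Et t R) (axis i 1 - \<pi>) $ a - app (Et t R) (axis j 1 - \<pi>) $ a)"
      unfolding w_def by (simp add: hZ integral_diff[OF FI FI])
    also have "\<dots> = integral {0..} (\<lambda>t. app (Et t R) u $ a)"
    proof (rule integral_cong)
      fix t
      have uu: "(axis i 1 - \<pi>) - (axis j 1 - \<pi>) = u" by (simp add: u_def)
      have "app (Et t R) u = app (Et t R) (axis i 1 - \<pi>) - app (Et t R) (axis j 1 - \<pi>)"
        by (subst uu[symmetric]) (rule app_diff_right)
      thus "app (Et t R) (axis i 1 - \<pi>) $ a - app (Et t R) (axis j 1 - \<pi>) $ a = app (Et t R) u $ a"
        by simp
    qed
    finally show ?thesis .
  qed
  obtain \<alpha> C where b: "0 < \<alpha>" "0 \<le> C"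
    "\<And>v t a. (\<Sum>a\<in>UNIV. v$a) = 0 \<Longrightarrow> 0 \<le> t \<Longrightarrow> \<bar>app (Et t R) v $ a\<bar> \<le> C * l1 v * exp (- \<alpha> * t)"
    "\<And>v a. (\<Sum>a\<in>UNIV. v$a) = 0 \<Longrightarrow> (\<lambda>n. app (Et (real n) R) v $ a) \<longlonglongrightarrow> 0"
    using bound[OF r i] by metis
  have sRu: "(\<Sum>a\<in>UNIV. (R *v u) $ a) = 0" by (rule colsum_Rv[OF r])
  have "(R *v w) $ a = - u $ a" for a
  proof -
    have "(R *v w) $ a = (\<Sum>c\<in>UNIV. R$a$c * integral {0..} (\<lambda>t. app (Et t R) u $ c))"
      by (simp add: matrix_vector_mult_def hw)
    also have "\<dots> = (\<Sum>c\<in>UNIV. integral {0..} (\<lambda>t. R$a$c * app (Et t R) u $ c))"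
      by (rule sum.cong[OF refl], rule integral_mult[OF GI])
    also have "\<dots> = integral {0..} (\<lambda>t. \<Sum>c\<in>UNIV. R$a$c * app (Et t R) u $ c)"
    proof (rule integral_sum[symmetric])
      show "(\<lambda>t. R$a$c * app (Et t R) u $ c) integrable_on {0..}" for c
        using integrable_cmul[OF GI, of "R$a$c" c] by simp
    qed simp
    also have "\<dots> = integral {0..} (\<lambda>t. app (Et t R) (R *v u) $ a)"
    proof (rule integral_cong)
      fix t
      have "app (Et t R) (R *v u) $ a = (R *v app (Et t R) u) $ a" by (simp only: Et_commute)
      thus "(\<Sum>c\<in>UNIV. R$a$c * app (Et t R) u $ c) = app (Et t R) (R *v u) $ a"
        by (simp only: matrix_vector_mult_def vec_lambda_beta)
    qed
    also have "\<dots> = 0 - app (Et 0 R) u $ a"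
    proof (rule ftc_inf)
      show "((\<lambda>t. app (Et t R) u $ a) has_real_derivative app (Et t R) (R *v u) $ a) (at t within {0..})" for t
        by (rule Et_deriv)
      show "\<bar>app (Et t R) (R *v u) $ a\<bar> \<le> C * l1 (R *v u) * exp (- \<alpha> * t)" if "0 \<le> t" for t
        by (rule b(3)[OF sRu that])
      show "(\<lambda>t. C * l1 (R *v u) * exp (- \<alpha> * t)) integrable_on {0..}"
        using integrable_on_cmult_left[OF integrable_on_exp_minus_to_infinity[OF b(1), of 0], of "C * l1 (R *v u)"]
        by simp
      show "(\<lambda>n. app (Et (real n) R) u $ a) \<longlonglongrightarrow> 0" by (rule b(4)[OF su])
    qed
    finally show ?thesis by simp
  qed
  thus "R *v w = - u" by (simp add: vec_eq_iff)
  have "(\<Sum>a\<in>UNIV. w$a) = (\<Sum>a\<in>UNIV. integral {0..} (\<lambda>t. app (Et t R) u $ a))"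
    by (simp only: hw)
  also have "\<dots> = integral {0..} (\<lambda>t. \<Sum>a\<in>UNIV. app (Et t R) u $ a)"
    by (rule integral_sum[symmetric]) (simp_all add: GI)
  also have "\<dots> = integral {0..} (\<lambda>t. 0::real)"
  proof -
    have "(\<Sum>a\<in>UNIV. app (Et t R) u $ a) = 0" for t using Et_sum[OF r, of t u] su by simp
    thus ?thesis by simp
  qed
  also have "integral {0..} (\<lambda>t. 0::real) = 0" by simp
  finally show "(\<Sum>a\<in>UNIV. w$a) = 0" .
qed

lemma vary_ok:
  assumes r: "rate_matrix R0" and ir: "irreducible_rates R0" and p: "R0 $ i $ j > 0"
    and ij: "i \<noteq> j" and y: "y > 0"
  shows "rate_matrix (vary_rate R0 i j y)" "irreducible_rates (vary_rate R0 i j y)"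
proof -
  let ?R = "vary_rate R0 i j y"
  have off: "?R $ a $ b = (if a = i \<and> b = j then y else R0 $ a $ b)" if "a \<noteq> b" for a b
    using that by (auto simp: vary_rate_def)
  have "?R $ b $ b = - (\<Sum>a\<in>UNIV - {b}. ?R $ a $ b)" for b
  proof (cases "b = j")
    case True
    have "(\<Sum>a\<in>UNIV - {b}. ?R $ a $ b) = (\<Sum>a\<in>UNIV - {b}. R0 $ a $ b + (if a = i then y - R0 $ i $ j else 0))"
      by (rule sum.cong) (auto simp: off True)
    also have "\<dots> = (\<Sum>a\<in>UNIV - {b}. R0 $ a $ b) + (y - R0 $ i $ j)"
      using ij True by (simp add: sum.distrib)
    finally show ?thesis using r True ij unfolding rate_matrix_def by (simp add: vary_rate_def)
  next
    case False
    have "(\<Sum>a\<in>UNIV - {b}. ?R $ a $ b) = (\<Sum>a\<in>UNIV - {b}. R0 $ a $ b)"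
      by (rule sum.cong) (auto simp: off False)
    thus ?thesis using r False ij unfolding rate_matrix_def by (simp add: vary_rate_def)
  qed
  moreover have "?R $ a $ b \<ge> 0" if "a \<noteq> b" for a b
    using r y that unfolding rate_matrix_def by (simp add: off)
  ultimately show "rate_matrix ?R" unfolding rate_matrix_def by blast
  have "{(b, a). a \<noteq> b \<and> ?R $ a $ b > 0} = {(b, a). a \<noteq> b \<and> R0 $ a $ b > 0}"
    using p y by (auto simp: off split: if_splits)
  thus "irreducible_rates ?R" using ir unfolding irreducible_rates_def by simp
qed

lemma vary_mv:
  assumes ij: "i \<noteq> j"
  shows "vary_rate R0 i j y *v v = vary_rate R0 i j x *v v + ((y - x) * v$j) *\<^sub>R (axis i 1 - axis j 1)"
proof -
  have d: "vary_rate R0 i j y $ a $ b - vary_rate R0 i j x $ a $ b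
      = (if b = j then (y - x) * (axis i 1 - axis j 1) $ a else 0)" for a b
    using ij by (auto simp: vary_rate_def axis_def)
  have e: "(vary_rate R0 i j y *v v) $ a - (vary_rate R0 i j x *v v) $ a
      = ((y - x) * v$j) * (axis i 1 - axis j 1) $ a" for a
  proof -
    have "(vary_rate R0 i j y *v v) $ a - (vary_rate R0 i j x *v v) $ a
      = (\<Sum>b\<in>UNIV. (vary_rate R0 i j y $ a $ b - vary_rate R0 i j x $ a $ b) * v $ b)"
      by (simp add: matrix_vector_mult_def sum_subtractf left_diff_distrib)
    also have "\<dots> = (\<Sum>b\<in>UNIV. if b = j then (y - x) * (axis i 1 - axis j 1) $ a * v $ b else 0)"
      by (rule sum.cong) (simp_all add: d)
    also have "\<dots> = ((y - x) * v$j) * (axis i 1 - axis j 1) $ a" by simp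
    finally show ?thesis .
  qed
  show ?thesis using e by (simp add: vec_eq_iff algebra_simps)
qed



theorem theorem1:
  fixes R0 :: "real^'n::finite^'n" and i j k l :: 'n and x :: real
  assumes "rate_matrix R0" and "irreducible_rates R0" and "R0 $ i $ j > 0"
    and "i \<noteq> j" and "k \<noteq> i" and "k \<noteq> j" and "l \<noteq> i" and "l \<noteq> j"
    and "x > 0"
    and "fund_matrix (vary_rate R0 i j x) $ l $ i - fund_matrix (vary_rate R0 i j x) $ l $ j \<noteq> 0"
  shows "((\<lambda>y. (fund_matrix (vary_rate R0 i j y) $ k $ i - fund_matrix (vary_rate R0 i j y) $ k $ j)
              / (fund_matrix (vary_rate R0 i j y) $ l $ i - fund_matrix (vary_rate R0 i j y) $ l $ j))
          has_real_derivative 0) (at x)"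
proof -
  note r = assms(1) and ir = assms(2) and p = assms(3) and ij = assms(4) and xpos = assms(9)
  define W where "W y = (\<chi> k. fund_matrix (vary_rate R0 i j y) $ k $ i - fund_matrix (vary_rate R0 i j y) $ k $ j)" for y
  define u :: "real^'n" where "u = axis i 1 - axis j 1"
  have fw: "vary_rate R0 i j y *v W y = - u" "(\<Sum>a\<in>UNIV. W y $ a) = 0" if "y > 0" for y
    using fund_w[OF vary_ok[OF r ir p ij that]] unfolding W_def u_def by auto
  have ui: "u $ i = 1" using ij by (simp add: u_def axis_def)
  have key: "\<exists>d. d \<noteq> 0 \<and> W y = d *\<^sub>R W x" if y: "y > 0" for y
  proof -
    note oky = vary_ok[OF r ir p ij y]
    define d0 where "d0 = 1 - (y - x) * W x $ j"
    have m: "vary_rate R0 i j y *v W x = - (d0 *\<^sub>R u)"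
      using vary_mv[OF ij, of R0 y "W x" x] fw(1)[OF xpos]
      by (simp add: d0_def u_def algebra_simps)
    have "d0 \<noteq> 0"
    proof
      assume "d0 = 0"
      hence "vary_rate R0 i j y *v W x = 0" using m by simp
      hence "W x = 0" using kerzero[OF oky] fw(2)[OF xpos] by blast
      hence "u = 0" using fw(1)[OF xpos] by simp
      thus False using ui by simp
    qed
    define V where "V = (1/d0) *\<^sub>R W x"
    have "vary_rate R0 i j y *v V = - u"
      using m \<open>d0 \<noteq> 0\<close> by (simp add: V_def matrix_vector_mult_scaleR)
    hence "vary_rate R0 i j y *v (W y - V) = 0"
      using fw(1)[OF y] by (simp add: matrix_vector_mult_diff_distrib)
    moreover have "(\<Sum>a\<in>UNIV. (W y - V) $ a) = 0"
      using fw(2)[OF y] fw(2)[OF xpos] by (simp add: V_def sum_subtractf sum_divide_distrib[symmetric])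
    ultimately have "W y - V = 0" by (rule kerzero[OF oky])
    hence "W y = (1/d0) *\<^sub>R W x" by (simp add: V_def)
    thus ?thesis using \<open>d0 \<noteq> 0\<close> by (intro exI[of _ "1/d0"]) simp
  qed
  let ?f = "\<lambda>y. (fund_matrix (vary_rate R0 i j y) $ k $ i - fund_matrix (vary_rate R0 i j y) $ k $ j)
              / (fund_matrix (vary_rate R0 i j y) $ l $ i - fund_matrix (vary_rate R0 i j y) $ l $ j)"
  have fW: "?f y = W y $ k / W y $ l" for y by (simp add: W_def)
  have const: "?f x = ?f y" if yS: "y \<in> {0<..}" for y
  proof -
    obtain d where d: "d \<noteq> 0" "W y = d *\<^sub>R W x" using key[of y] yS by auto
    show ?thesis using d by (simp add: fW)
  qed
  show ?thesis
    by (rule has_field_derivative_transform_within_open[OF DERIV_const, of "{0<..}"])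
       (use xpos const in auto)
qed

end
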